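(* Let $(X,+)$ be an abelian group, $(g,\gamma)$ a construction pair on $(X,+)$, and $C=\langle b\rangle$ a cyclic group such that, if $C$ is finite, both $|g|$ and $r(g,\gamma)$ divide $|C|$. Then the set $C\times X$ with multiplication $$(b^i,x)\cdot(b^j,y)=\Big(b^{i+j},\ g^{-j}(x)+y+\sum_{k\in I(i+j,-j)}g^{-k}(\gamma(x,y))\Big)$$ is a (well-defined) Moufang loop $Q=C\ltimes_{(g,\gamma)}X$ with neutral element $(1,0)$ and inverses $(b^i,x)^{-1}=(b^{-i},-g^i(x))$.
   Context: Let $(X,+)$ be an abelian group. A map $\gamma:X\times X\to X$ is symmetric if $\gamma(x,y)=\gamma(y,x)$, alternating if $\gamma(x,x)=0$, biadditive if additive in each argument. Its radical is $\mathrm{Rad}(\gamma)=\{x\in X:\gamma(x,y)=0\text{ for all }y\in X\}$. A construction pair on $(X,+)$ is a pair $(g,\gamma)$ where $g$ is a permutation of $X$ and $\gamma:X\times X\to X$ is symmetric, alternating and biadditive, such that for all $x,y,z\in X$: (C1) $g^{-1}(g(x)+g(y))=x+y+\gamma(x,y)+g^{-1}(\gamma(x,y))+g^{-2}(\gamma(x,y))$; (C2) $\gamma(\gamma(x,y),z)=0$; (C3) $g^{-1}(\gamma(x,y))=\gamma(g(x),y)$. For integers $i,j$ the interval $I(i,j)\subseteq\mathbb Z$ is $\emptyset$ if $i=j$, $\{i,\dots,j-1\}$ if $i<j$, and $\{j,\dots,i-1\}$ if $j<i$. $r(g,\gamma)$ is the least positive integer $r$ such that $\sum_{0\le k<r}g^k(x)\in\mathrm{Rad}(\gamma)$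 for all $x\in X$, or $\infty$ if none exists. A loop is Moufang if it satisfies $xy\cdot zx=(x\cdot yz)x$ for all $x,y,z$. *)

theory Defs
  imports Main
begin

definition gpow :: "('a \<Rightarrow> 'a) \<Rightarrow> int \<Rightarrow> 'a \<Rightarrow> 'a" where
  "gpow g k = (if 0 \<le> k then g ^^ nat k else inv g ^^ nat (- k))"

definition construction_pair :: "('a::ab_group_add \<Rightarrow> 'a) \<Rightarrow> ('a \<Rightarrow> 'a \<Rightarrow> 'a) \<Rightarrow> bool" where
  "construction_pair g \<gamma> \<longleftrightarrow>
     bij g \<and>
     (\<forall>x y. \<gamma> x y = \<gamma> y x) \<and>
     (\<forall>x. \<gamma> x x = 0) \<and>
     (\<forall>x y z. \<gamma> (x + y) z = \<gamma> x z + \<gamma> y z) \<and>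
     (\<forall>x y z. \<gamma> x (y + z) = \<gamma> x y + \<gamma> x z) \<and>
     (\<forall>x y. inv g (g x + g y) = x + y + \<gamma> x y + inv g (\<gamma> x y) + (inv g ^^ 2) (\<gamma> x y)) \<and>
     (\<forall>x y z. \<gamma> (\<gamma> x y) z = 0) \<and>
     (\<forall>x y. inv g (\<gamma> x y) = \<gamma> (g x) y)"

definition Rad :: "('a \<Rightarrow> 'a \<Rightarrow> 'a::zero) \<Rightarrow> 'a set" where
  "Rad \<gamma> = {x. \<forall>y. \<gamma> x y = 0}"

(* r(g,gamma); the value 0 encodes infinity *)
definition r_gg :: "('a::comm_monoid_add \<Rightarrow> 'a) \<Rightarrow> ('a \<Rightarrow> 'a \<Rightarrow> 'a) \<Rightarrow> nat" where
  "r_gg g \<gamma> = (if \<exists>r>0. \<forall>x. (\<Sum>k<r. (g ^^ k) x) \<in> Rad \<gamma>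
                then LEAST r. r > 0 \<and> (\<forall>x. (\<Sum>k<r. (g ^^ k) x) \<in> Rad \<gamma>) else 0)"

(* order |g| of a permutation; the value 0 encodes infinite order *)
definition perm_order :: "('a \<Rightarrow> 'a) \<Rightarrow> nat" where
  "perm_order g = (if \<exists>k>0. g ^^ k = id then LEAST k. k > 0 \<and> g ^^ k = id else 0)"

definition Ival :: "int \<Rightarrow> int \<Rightarrow> int set" where
  "Ival i j = (if i = j then {} else if i < j then {i..<j} else {j..<i})"

(* Cyclic group C = <b> of order n (n = 0 means infinite), b^i represented by i;
   canonical representatives: {0..<n} if n > 0, all integers if n = 0 *)
definition cyc_carrier :: "nat \<Rightarrow> int set" where
  "cyc_carrier n = (if n = 0 then UNIV else {0..<int n})"

definition sd_comp :: "('a::ab_group_add \<Rightarrow> 'a) \<Rightarrow> ('a \<Rightarrow> 'a \<Rightarrow> 'a) \<Rightarrow> int \<Rightarrow> 'a \<Rightarrow> int \<Rightarrow> 'a \<Rightarrow> 'a" where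
  "sd_comp g \<gamma> i x j y =
     gpow g (- j) x + y + (\<Sum>k\<in>Ival (i + j) (- j). gpow g (- k) (\<gamma> x y))"

definition sd_mult :: "nat \<Rightarrow> ('a::ab_group_add \<Rightarrow> 'a) \<Rightarrow> ('a \<Rightarrow> 'a \<Rightarrow> 'a) \<Rightarrow> int \<times> 'a \<Rightarrow> int \<times> 'a \<Rightarrow> int \<times> 'a" where
  "sd_mult n g \<gamma> p q = (case p of (i, x) \<Rightarrow> case q of (j, y) \<Rightarrow>
      ((i + j) mod int n, sd_comp g \<gamma> i x j y))"

definition sd_carrier :: "nat \<Rightarrow> (int \<times> 'a) set" where
  "sd_carrier n = cyc_carrier n \<times> UNIV"

definition is_loop :: "'b set \<Rightarrow> ('b \<Rightarrow> 'b \<Rightarrow> 'b) \<Rightarrow> 'b \<Rightarrow> bool" where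
  "is_loop Q m e \<longleftrightarrow>
     e \<in> Q \<and>
     (\<forall>a\<in>Q. \<forall>b\<in>Q. m a b \<in> Q) \<and>
     (\<forall>a\<in>Q. m e a = a \<and> m a e = a) \<and>
     (\<forall>a\<in>Q. \<forall>b\<in>Q. \<exists>!x. x \<in> Q \<and> m a x = b) \<and>
     (\<forall>a\<in>Q. \<forall>b\<in>Q. \<exists>!y. y \<in> Q \<and> m y a = b)"

definition is_moufang_loop :: "'b set \<Rightarrow> ('b \<Rightarrow> 'b \<Rightarrow> 'b) \<Rightarrow> 'b \<Rightarrow> bool" where
  "is_moufang_loop Q m e \<longleftrightarrow> is_loop Q m e \<and>
     (\<forall>x\<in>Q. \<forall>y\<in>Q. \<forall>z\<in>Q. m (m x y) (m z x) = m (m x (m y z)) x)"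

end

theory Submission
  imports Defs
begin



locale cpair =
  fixes g :: "'a::ab_group_add \<Rightarrow> 'a" and \<gamma> :: "'a \<Rightarrow> 'a \<Rightarrow> 'a"
  assumes cp: "construction_pair g \<gamma>"
begin

abbreviation "h \<equiv> inv g"
definition T :: "int \<Rightarrow> 'a \<Rightarrow> 'a" where "T = gpow g"

lemma bij: "bij g" using cp unfolding construction_pair_def by blast
lemma gsym: "\<gamma> x y = \<gamma> y x" using cp unfolding construction_pair_def by blast
lemma galt[simp]: "\<gamma> x x = 0" using cp unfolding construction_pair_def by blast
lemma gaddL[simp]: "\<gamma> (x + y) z = \<gamma> x z + \<gamma> y z" using cp unfolding construction_pair_def by blast
lemma gaddR[simp]: "\<gamma> x (y + z) = \<gamma> x y + \<gamma> x z" using cp unfolding construction_pair_def by blast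
lemma C1: "h (g x + g y) = x + y + \<gamma> x y + h (\<gamma> x y) + h (h (\<gamma> x y))"
  using cp unfolding construction_pair_def by (simp add: numeral_2_eq_2)
lemma C2[simp]: "\<gamma> (\<gamma> x y) z = 0" using cp unfolding construction_pair_def by blast
lemma C3: "h (\<gamma> x y) = \<gamma> (g x) y" using cp unfolding construction_pair_def by blast

lemma hg[simp]: "h (g x) = x" using bij by (simp add: bij_def)
lemma gh[simp]: "g (h x) = x" using bij by (simp add: bij_def surj_f_inv_f)

lemma g0L[simp]: "\<gamma> 0 y = 0" using gaddL[of 0 0 y] by simp
lemma g0R[simp]: "\<gamma> y 0 = 0" using gaddR[of y 0 0] by simp
lemma gnegL[simp]: "\<gamma> (- x) y = - \<gamma> x y" using gaddL[of x "-x" y] by (simp add: eq_neg_iff_add_eq_0 add.commute)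
lemma gnegR[simp]: "\<gamma> x (- y) = - \<gamma> x y" using gaddR[of x y "-y"] by (simp add: eq_neg_iff_add_eq_0 add.commute)
lemma gtor[simp]: "\<gamma> x y + \<gamma> x y = 0"
proof -
  have "\<gamma> (x+y) (x+y) = \<gamma> x x + \<gamma> y x + (\<gamma> x y + \<gamma> y y)" by (simp only: gaddL gaddR)
  then show ?thesis using gsym[of y x] galt[of "x+y"] galt[of x] galt[of y] by simp
qed
lemma gtor_neg[simp]: "- \<gamma> x y = \<gamma> x y" using gtor[of x y] by (simp add: neg_eq_iff_add_eq_0)

lemma h0[simp]: "h 0 = 0" using C3[of 0 0] by simp
lemma g0[simp]: "g 0 = 0" using gh[of 0] h0 by simp

definition Rd where "Rd = Rad \<gamma>"
lemma Rd_gamma[simp]: "\<gamma> x y \<in> Rd" by (simp add: Rd_def Rad_def)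
lemma RdL[simp]: "u \<in> Rd \<Longrightarrow> \<gamma> u v = 0" unfolding Rd_def Rad_def by blast
lemma RdR[simp]: "u \<in> Rd \<Longrightarrow> \<gamma> v u = 0" 
proof -
  assume "u \<in> Rd"
  have "\<gamma> v u = \<gamma> u v" by (rule gsym)
  also have "\<dots> = 0" using RdL \<open>u \<in> Rd\<close> by blast
  finally show ?thesis .
qed
lemma Rd_add[simp]: assumes "u \<in> Rd" "v \<in> Rd" shows "u + v \<in> Rd"
proof -
  have "\<forall>y. \<gamma> (u+v) y = 0" using RdL[OF assms(1)] RdL[OF assms(2)] by (simp del: RdL RdR)
  then show ?thesis unfolding Rd_def Rad_def by blast
qed
lemma Rd_neg[simp]: assumes "u \<in> Rd" shows "- u \<in> Rd"
proof -
  have "\<gamma> (- u) y = 0" for y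
  proof -
    have "\<gamma> (- u) y = - \<gamma> u y" by (rule gnegL)
    also have "\<dots> = 0" using RdL[OF assms(1)] by (simp only: minus_zero)
    finally show ?thesis .
  qed
  then show ?thesis unfolding Rd_def Rad_def by blast
qed
lemma Rd_0[simp]: "0 \<in> Rd" unfolding Rd_def Rad_def by simp

lemma gamma_g: "\<gamma> (g x) y = h (\<gamma> x y)" using C3 by simp
lemma gamma_h: "\<gamma> (h x) y = g (\<gamma> x y)"
proof -
  have "h (\<gamma> (h x) y) = \<gamma> x y" using C3[of "h x" y] by simp
  then have "g (h (\<gamma> (h x) y)) = g (\<gamma> x y)" by simp
  then show ?thesis by simp
qed

lemma h_Rd_add: assumes "u \<in> Rd" shows "h (u + v) = h u + h v"
proof -
  have "\<gamma> (h u) (h v) = 0" using assms by (simp add: gamma_h)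
  then show ?thesis using C1[of "h u" "h v"] by simp
qed
lemma g_Rd_add: assumes "u \<in> Rd" shows "g (u + v) = g u + g v"
proof -
  have "h (g u + g v) = u + v" using C1[of u v] assms by simp
  then have "g (h (g u + g v)) = g (u + v)" by simp
  then show ?thesis by simp
qed

lemma T0[simp]: "T 0 x = x" by (simp add: T_def gpow_def)
lemma T_succ: "T (k + 1) x = g (T k x)"
proof (cases "0 \<le> k")
  case True
  then have "nat (k+1) = Suc (nat k)" by simp
  then show ?thesis using True by (simp add: T_def gpow_def)
next
  case False
  then have "nat (- k) = Suc (nat (- (k+1)))" by simp
  then show ?thesis using False by (auto simp add: T_def gpow_def)
qed
lemma T_pred: "T (k - 1) x = h (T k x)"
proof -
  have "T k x = g (T (k-1) x)" using T_succ[of "k-1" x] by simp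
  then have "h (T k x) = h (g (T (k-1) x))" by simp
  then show ?thesis by simp
qed

lemma T_add[simp]: "T a (T b x) = T (a + b) x"
proof (induction a rule: int_induct[where k=0])
  case base then show ?case by simp
next
  case (step1 i)
  have "T (i + 1) (T b x) = g (T (i + b) x)" using step1 by (simp add: T_succ)
  also have "\<dots> = T (i + b + 1) x" by (simp add: T_succ)
  finally show ?case by (simp add: ac_simps)
next
  case (step2 i)
  have "T (i - 1) (T b x) = h (T (i + b) x)" using step2 by (simp add: T_pred)
  also have "\<dots> = T (i + b - 1) x" by (simp add: T_pred)
  finally show ?case by (simp add: algebra_simps)
qed

lemma T1: "T 1 x = g x" using T_succ[of 0 x] by simp
lemma Tm1: "T (-1) x = h x" using T_pred[of 0 x] by simp

lemma T_zero[simp]: "T m 0 = 0"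
proof (induction m rule: int_induct[where k=0])
  case base then show ?case by simp
next
  case (step1 i) then show ?case by (simp add: T_succ)
next
  case (step2 i) then show ?case by (simp add: T_pred)
qed

lemma gamma_T[simp]: "\<gamma> (T m x) y = T (- m) (\<gamma> x y)"
proof (induction m arbitrary: x rule: int_induct[where k=0])
  case base then show ?case by simp
next
  case (step1 i)
  have "\<gamma> (T (i+1) x) y = h (\<gamma> (T i x) y)" by (simp add: T_succ gamma_g)
  also have "\<dots> = h (T (-i) (\<gamma> x y))" using step1 by simp
  also have "\<dots> = T (-i - 1) (\<gamma> x y)" by (simp add: T_pred)
  also have "-i - 1 = - (i + 1)" by simp
  finally show ?case .
next
  case (step2 i)
  have "\<gamma> (T (i-1) x) y = g (\<gamma> (T i x) y)" by (simp add: T_pred gamma_h)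
  also have "\<dots> = g (T (-i) (\<gamma> x y))" using step2 by simp
  also have "\<dots> = T (-i + 1) (\<gamma> x y)" by (rule T_succ[of "-i", symmetric])
  also have "-i + 1 = - (i - 1)" by simp
  finally show ?case .
qed
lemma gamma_T2[simp]: "\<gamma> y (T m x) = T (- m) (\<gamma> y x)"
  using gamma_T[of m x y] by (simp add: gsym)

lemma T_Rd[simp]: "u \<in> Rd \<Longrightarrow> T m u \<in> Rd" unfolding Rd_def Rad_def by (simp del: RdL RdR)
lemma XX: True
  by (simp add: Rd_def Rad_def)

lemma T_Rd_add: "u \<in> Rd \<Longrightarrow> T m (u + v) = T m u + T m v"
proof (induction m arbitrary: u v rule: int_induct[where k=0])
  case base then show ?case by simp
next
  case (step1 i) then show ?case by (simp add: T_succ g_Rd_add)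
next
  case (step2 i) then show ?case by (simp add: T_pred h_Rd_add)
qed
lemma T_Rd_add2: "v \<in> Rd \<Longrightarrow> T m (u + v) = T m u + T m v"
  using T_Rd_add[of v m u] by (simp add: add.commute)

end


context cpair begin

definition S :: "'a \<Rightarrow> int \<Rightarrow> int \<Rightarrow> 'a" where "S c a b = (\<Sum>k\<in>Ival a b. T (- k) c)"
definition P :: "'a \<Rightarrow> int \<Rightarrow> 'a" where "P c a = S c 0 a"
definition tor :: "'a \<Rightarrow> bool" where "tor c \<longleftrightarrow> (\<forall>k. T k c + T k c = 0)"

lemma Ival_sym: "Ival a b = Ival b a" by (simp add: Ival_def)
lemma Ival_le: "a \<le> b \<Longrightarrow> Ival a b = {a..<b}" by (simp add: Ival_def)
lemma S_sym: "S c a b = S c b a" by (simp add: S_def Ival_sym)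
lemma S_self[simp]: "S c a a = 0" by (simp add: S_def Ival_def)
lemma S_le: "a \<le> b \<Longrightarrow> S c a b = (\<Sum>k\<in>{a..<b}. T (- k) c)" by (simp add: S_def Ival_le)

lemma tor_gamma[simp]: "tor (\<gamma> u v)"
  unfolding tor_def
proof
  fix k
  have "T k (\<gamma> u v) = \<gamma> (T (-k) u) v" by simp
  then show "T k (\<gamma> u v) + T k (\<gamma> u v) = 0" by (simp only: gtor)
qed

lemma S_split: assumes "a \<le> b" "b \<le> d" shows "S c a d = S c a b + S c b d"
proof -
  have "{a..<d} = {a..<b} \<union> {b..<d}" using assms by auto
  then have "(\<Sum>k\<in>{a..<d}. T (- k) c) = (\<Sum>k\<in>{a..<b}. T (- k) c) + (\<Sum>k\<in>{b..<d}. T (- k) c)"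
    by (simp add: sum.union_disjoint)
  then show ?thesis using assms by (simp add: S_le)
qed

lemma S_tor2: assumes "tor c" shows "S c a b + S c a b = 0"
proof -
  have "S c a b + S c a b = (\<Sum>k\<in>Ival a b. T (- k) c + T (- k) c)"
    by (simp add: S_def sum.distrib)
  also have "\<dots> = 0" using assms by (simp add: tor_def)
  finally show ?thesis .
qed

lemma S_cocycle: assumes "tor c" shows "S c a b + S c b d = S c a d"
proof -
  have t: "\<And>a b. S c a b + S c a b = 0" using S_tor2[OF assms] .
  have t2: "\<And>a b x. S c a b + (S c a b + x) = x" by (simp only: add.assoc[symmetric] t add_0_left)
  consider "a \<le> b" "b \<le> d" | "a \<le> d" "d \<le> b" | "b \<le> a" "a \<le> d" | "b \<le> d" "d \<le> a"
    | "d \<le> a" "a \<le> b" | "d \<le> b" "b \<le> a" by linarith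
  then show ?thesis
  proof cases
    case 1 then show ?thesis by (rule S_split[symmetric])
  next
    case 2
    have e1: "S c a b = S c a d + S c d b" using 2 by (rule S_split)
    have e2: "S c b d = S c d b" by (rule S_sym)
    show ?thesis by (simp only: e1 e2 add.assoc t add_0_right)
  next
    case 3
    have e1: "S c b d = S c b a + S c a d" using 3 by (rule S_split)
    have e2: "S c a b = S c b a" by (rule S_sym)
    show ?thesis by (simp only: e1 e2 add.assoc[symmetric] t add_0_left)
  next
    case 4
    have e1: "S c b a = S c b d + S c d a" using 4 by (rule S_split)
    have e2: "S c a b = S c b a" by (rule S_sym)
    have e3: "S c a d = S c d a" by (rule S_sym)
    show ?thesis by (simp only: e1 e2 e3 add.assoc add.commute[of "S c d a" "S c b d"] t2)
  next
    case 5
    have e1: "S c d b = S c d a + S c a b" using 5 by (rule S_split)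
    have e2: "S c b d = S c d b" by (rule S_sym)
    have e3: "S c a d = S c d a" by (rule S_sym)
    show ?thesis by (simp only: e1 e2 e3 add.commute[of "S c a b"] add.assoc t add_0_right)
  next
    case 6
    have e1: "S c d a = S c d b + S c b a" using 6 by (rule S_split)
    have e2: "S c a b = S c b a" by (rule S_sym)
    have e3: "S c a d = S c d a" by (rule S_sym)
    have e4: "S c b d = S c d b" by (rule S_sym)
    show ?thesis by (simp only: e1 e2 e3 e4 add.commute[of "S c b a"])
  qed
qed

lemma S_P: assumes "tor c" shows "S c a b = P c a + P c b"
  unfolding P_def using S_cocycle[OF assms, of a 0 b] S_sym[of c a 0] by simp

lemma img_minus: "(\<lambda>x::int. x - m) ` {a..<b} = {a - m..<b - m}"
  using image_add_atLeastLessThan'[of "-m" a b] by simp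

lemma S_shiftc: "S (T m c) a b = S c (a - m) (b - m)"
proof -
  have inj: "inj_on (\<lambda>k. k - m) (Ival a b)" by (auto simp: inj_on_def)
  have im: "(\<lambda>k. k - m) ` Ival a b = Ival (a - m) (b - m)"
    by (simp add: Ival_def img_minus)
  have "S c (a - m) (b - m) = (\<Sum>k\<in>Ival a b. T (- (k - m)) c)"
    unfolding S_def im[symmetric] sum.reindex[OF inj] by (simp add: o_def)
  also have "\<dots> = S (T m c) a b" unfolding S_def by (simp add: algebra_simps)
  finally show ?thesis by simp
qed

lemma sum_Rd: "(\<And>x. x \<in> A \<Longrightarrow> f x \<in> Rd) \<Longrightarrow> sum f A \<in> Rd"
  by (induction A rule: infinite_finite_induct) auto

lemma T_sum: "(\<And>x. x \<in> A \<Longrightarrow> f x \<in> Rd) \<Longrightarrow> T m (sum f A) = (\<Sum>x\<in>A. T m (f x))"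
proof (induction A rule: infinite_finite_induct)
  case (insert x F)
  then show ?case by (simp add: T_Rd_add sum_Rd)
qed auto

lemma S_Rd[simp]: "c \<in> Rd \<Longrightarrow> S c a b \<in> Rd" unfolding S_def by (rule sum_Rd) simp
lemma P_Rd[simp]: "c \<in> Rd \<Longrightarrow> P c a \<in> Rd" unfolding P_def by simp

lemma T_S: assumes "c \<in> Rd" shows "T m (S c a b) = S c (a - m) (b - m)"
proof -
  have "T m (S c a b) = (\<Sum>k\<in>Ival a b. T (- k) (T m c))"
    unfolding S_def using assms by (simp add: T_sum add.commute)
  also have "\<dots> = S (T m c) a b" by (simp add: S_def)
  finally show ?thesis by (simp add: S_shiftc)
qed

lemma S_add: assumes "c1 \<in> Rd" shows "S (c1 + c2) a b = S c1 a b + S c2 a b"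
  unfolding S_def using assms by (simp add: T_Rd_add sum.distrib)

lemma T_neg_Rd: assumes "c \<in> Rd" shows "T m (- c) = - T m c"
  using T_Rd_add[OF assms, of m "-c"] by (simp add: eq_neg_iff_add_eq_0 add.commute)

lemma S_neg: assumes "c \<in> Rd" shows "S (- c) a b = - S c a b"
  unfolding S_def using assms by (simp add: T_neg_Rd sum_negf)

lemma S_zero[simp]: "S 0 a b = 0" by (simp add: S_def)

lemma tor_T[simp]: "tor c \<Longrightarrow> tor (T m c)" by (simp add: tor_def)

end


context cpair begin

lemma g_Rd_add2: "v \<in> Rd \<Longrightarrow> g (u + v) = g u + g v"
  using g_Rd_add[of v u] by (simp add: add.commute)

lemma S_2m1: "S c 2 (-1) = g c + c + h c"
proof -
  have "Ival 2 (-1) = {-1, 0, 1}" by (auto simp: Ival_def)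
  then show ?thesis by (simp add: S_def T1 Tm1 algebra_simps)
qed
lemma S_m21: "S c (-2) 1 = T 2 c + g c + c"
proof -
  have "Ival (-2) 1 = {-2, -1, 0}" by (auto simp: Ival_def)
  then show ?thesis by (simp add: S_def T1 Tm1 algebra_simps)
qed

lemma neg_S_gamma[simp]: "- S (\<gamma> u v) a b = S (\<gamma> u v) a b"
  using S_tor2[OF tor_gamma, of u v a b] by (simp add: neg_eq_iff_add_eq_0)

lemma g_exp: "g (u + v) = g u + g v + S (\<gamma> u v) 2 (-1)"
proof -
  let ?c = "\<gamma> u v"
  have "h (g u + g v) = (?c + h ?c + h (h ?c)) + (u + v)" using C1[of u v] by (simp add: algebra_simps)
  then have "g u + g v = g ((?c + h ?c + h (h ?c)) + (u + v))" by (metis gh)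
  also have "\<dots> = g (?c + h ?c + h (h ?c)) + g (u + v)"
    by (rule g_Rd_add) (simp add: Tm1[symmetric])
  also have "g (?c + h ?c + h (h ?c)) = g ?c + ?c + h ?c"
    by (simp add: T_Rd_add Tm1[symmetric] T1[symmetric])
  also have "\<dots> = S ?c 2 (-1)" by (simp add: S_2m1)
  finally have "g (u + v) = g u + g v - S ?c 2 (-1)" by (simp add: algebra_simps)
  then show ?thesis by simp
qed

lemma h_exp: "h (u + v) = h u + h v + S (\<gamma> u v) (-2) 1"
proof -
  let ?c = "\<gamma> u v"
  have c': "\<gamma> (h u) (h v) = T 2 ?c" by (simp add: Tm1[symmetric])
  have "h (u + v) = h (g (h u) + g (h v))" by simp
  also have "\<dots> = h u + h v + (\<gamma> (h u) (h v) + h (\<gamma> (h u) (h v)) + h (h (\<gamma> (h u) (h v))))"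
    by (simp only: C1 add.assoc)
  also have "\<gamma> (h u) (h v) + h (\<gamma> (h u) (h v)) + h (h (\<gamma> (h u) (h v))) = S ?c (-2) 1"
    unfolding c' S_m21 by (simp add: Tm1[symmetric] T1[symmetric])
  finally show ?thesis .
qed

end


context cpair begin

lemma T1_exp: "T 1 (u + v) = T 1 u + T 1 v + S (\<gamma> u v) 2 (-1)"
  using g_exp by (simp add: T1)
lemma Tm1_exp: "T (-1) (u + v) = T (-1) u + T (-1) v + S (\<gamma> u v) (-2) 1"
  using h_exp by (simp add: Tm1)

lemma S_gP: "S (\<gamma> u v) a b = P (\<gamma> u v) a + P (\<gamma> u v) b"
  by (rule S_P[OF tor_gamma])
lemma T_gP: "T m (\<gamma> u v) = P (\<gamma> u v) (-m) + P (\<gamma> u v) (1 - m)"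
proof -
  have "Ival (-m) (1-m) = {-m}" by (auto simp: Ival_def)
  then have "S (\<gamma> u v) (-m) (1-m) = T m (\<gamma> u v)" by (simp add: S_def)
  then show ?thesis by (simp add: S_gP)
qed
lemma P_tor: "P (\<gamma> u v) a + P (\<gamma> u v) a = 0"
  unfolding P_def by (rule S_tor2[OF tor_gamma])
lemma P_tor2: "P (\<gamma> u v) a + (P (\<gamma> u v) a + x) = x"
  by (simp add: add.assoc[symmetric] P_tor)
lemma neg_P[simp]: "- P (\<gamma> u v) a = P (\<gamma> u v) a"
  using P_tor[of u v a] by (simp add: neg_eq_iff_add_eq_0)
lemma P_0[simp]: "P c 0 = 0" by (simp add: P_def)

lemmas NR = diff_conv_add_uminus minus_add_distrib minus_minus add_ac

lemma T_exp: "T m (u + v) = T m u + T m v + S (\<gamma> u v) (2*m) (-m)"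
proof (induction m arbitrary: u v rule: int_induct[where k=0])
  case base then show ?case by simp
next
  case (step1 i)
  have "T (i+1) (u+v) = T 1 (T i (u + v))" by (simp add: add.commute)
  also have "\<dots> = T 1 (T i u + T i v + S (\<gamma> u v) (2*i) (-i))"
    using step1 by (simp only:)
  also have "\<dots> = T 1 (T i u + T i v) + T 1 (S (\<gamma> u v) (2*i) (-i))"
    by (simp add: T_Rd_add2)
  also have "\<dots> = T (i+1) u + T (i+1) v + S (\<gamma> u v) (2*(i+1)) (-(i+1))"
    apply (simp add: T1_exp T_S S_shiftc)
    apply (simp add: S_gP T_gP)
    apply (simp add: algebra_simps)
    apply (simp only: NR P_tor P_tor2)
    done
  finally show ?case .
next
  case (step2 i)
  have "T (i-1) (u+v) = T (-1) (T i (u + v))" by simp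
  also have "\<dots> = T (-1) (T i u + T i v + S (\<gamma> u v) (2*i) (-i))"
    using step2 by (simp only:)
  also have "\<dots> = T (-1) (T i u + T i v) + T (-1) (S (\<gamma> u v) (2*i) (-i))"
    by (simp add: T_Rd_add2)
  also have "\<dots> = T (i-1) u + T (i-1) v + S (\<gamma> u v) (2*(i-1)) (-(i-1))"
    apply (simp add: Tm1_exp T_S S_shiftc)
    apply (simp add: S_gP T_gP)
    apply (simp add: algebra_simps)
    apply (simp only: NR P_tor P_tor2)
    done
  finally show ?case .
qed

end


context cpair begin

lemma comp_eq: "sd_comp g \<gamma> i x j y = T (-j) x + y + S (\<gamma> x y) (i+j) (-j)"
  by (simp add: sd_comp_def S_def T_def)

lemma T_neg: "T m (- u) = - T m u"
proof -
  have e: "T m (u + - u) = T m u + T m (- u) + S (\<gamma> u (- u)) (2*m) (-m)" by (rule T_exp)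
  have z: "\<gamma> u (- u) = 0" by simp
  from e have "T m 0 = T m u + T m (- u)" by (simp only: z S_zero add_0_right right_minus)
  then have "T m u + T m (- u) = 0" by simp
  from minus_unique[OF this] show ?thesis by simp
qed

lemma T_exp_diff: "T m (u - v) = T m u - T m v + S (\<gamma> u v) (2*m) (-m)"
  using T_exp[of m u "- v"] by (simp add: T_neg)
lemma gdiffL[simp]: "\<gamma> (u - v) w = \<gamma> u w - \<gamma> v w"
  using gaddL[of u "-v" w] by simp
lemma gdiffR[simp]: "\<gamma> w (u - v) = \<gamma> w u - \<gamma> w v"
  using gaddR[of w u "-v"] by simp
lemma Rd_diff[simp]: "u \<in> Rd \<Longrightarrow> v \<in> Rd \<Longrightarrow> u - v \<in> Rd"
  using Rd_add[of u "-v"] by simp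
lemma S_diff: "c1 \<in> Rd \<Longrightarrow> c2 \<in> Rd \<Longrightarrow> S (c1 - c2) a b = S c1 a b - S c2 a b"
  using S_add[of c1 "-c2"] S_neg[of c2] by simp

lemmas ST1 = comp_eq T_exp T_exp_diff T_S S_shiftc S_add S_neg S_diff T_neg
lemmas ST2 = S_gP T_gP gsym

lemma mouf2: "sd_comp g \<gamma> (i+j) (sd_comp g \<gamma> i x j y) (k+i) (sd_comp g \<gamma> k z i x)
   = sd_comp g \<gamma> (i + (j+k)) (sd_comp g \<gamma> i x (j+k) (sd_comp g \<gamma> j y k z)) i x"
  by (simp add: ST1, (simp add: ST2)?, (simp add: algebra_simps)?, (simp only: NR P_tor P_tor2 neg_P add_0_left add_0_right)?)



lemma LIP2: "sd_comp g \<gamma> (-i) (- T i x) (i+j) (sd_comp g \<gamma> i x j y) = y"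
  by (simp add: ST1, (simp add: ST2)?, (simp add: algebra_simps)?, (simp only: NR P_tor P_tor2 neg_P add_0_left add_0_right)?)

lemma LIP2b: "sd_comp g \<gamma> i x (-i + j) (sd_comp g \<gamma> (-i) (- T i x) j y) = y"
  by (simp add: ST1, (simp add: ST2)?, (simp add: algebra_simps)?, (simp only: NR P_tor P_tor2 neg_P add_0_left add_0_right)?)

lemma RIP2: "sd_comp g \<gamma> (j+i) (sd_comp g \<gamma> j y i x) (-i) (- T i x) = y"
  by (simp add: ST1, (simp add: ST2)?, (simp add: algebra_simps)?, (simp only: NR P_tor P_tor2 neg_P add_0_left add_0_right)?)

lemma RIP2b: "sd_comp g \<gamma> (j + -i) (sd_comp g \<gamma> j y (-i) (- T i x)) i x = y"
  by (simp add: ST1, (simp add: ST2)?, (simp add: algebra_simps)?, (simp only: NR P_tor P_tor2 neg_P add_0_left add_0_right)?)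

lemma INV1: "sd_comp g \<gamma> i x (-i) (- T i x) = 0"
  by (simp add: ST1, (simp add: ST2)?, (simp add: algebra_simps)?, (simp only: NR P_tor P_tor2 neg_P add_0_left add_0_right)?)

lemma INV2: "sd_comp g \<gamma> (-i) (- T i x) i x = 0"
  by (simp add: ST1, (simp add: ST2)?, (simp add: algebra_simps)?, (simp only: NR P_tor P_tor2 neg_P add_0_left add_0_right)?)

lemma ID1: "sd_comp g \<gamma> 0 0 i x = x" by (simp add: comp_eq)
lemma ID2: "sd_comp g \<gamma> i x 0 0 = x" by (simp add: comp_eq)

end



locale cpn = cpair +
  fixes n :: nat
  assumes nd: "n > 0 \<Longrightarrow> perm_order g dvd n \<and> r_gg g \<gamma> dvd n"
begin

lemma T_nat: "T (int k) x = (g ^^ k) x" by (simp add: T_def gpow_def)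

lemma gn_id: assumes "n > 0" shows "g ^^ n = id"
proof -
  let ?p = "perm_order g"
  have d: "?p dvd n" using nd assms by blast
  have ex: "\<exists>k>0. g ^^ k = id"
  proof (rule ccontr)
    assume na: "\<not> (\<exists>k>0. g ^^ k = id)"
    have "?p = 0" unfolding perm_order_def by (rule if_not_P[OF na])
    then show False using d assms by simp
  qed
  then have "?p > 0 \<and> g ^^ ?p = id" unfolding perm_order_def
    using LeastI_ex[of "\<lambda>k. k > 0 \<and> g ^^ k = id"] by simp
  moreover obtain q where "n = ?p * q" using d by (auto simp: dvd_def)
  ultimately show ?thesis by (metis funpow_mult id_funpow)
qed

lemma Tn: "T (int n * t) x = x"
proof (cases "n > 0")
  case False then show ?thesis by simp
next
  case True
  have n1: "T (int n) x = x" for x using gn_id[OF True] by (simp add: T_nat)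
  have n2: "T (- int n) x = x" for x
  proof -
    have "T (- int n) x = T (- int n) (T (int n) x)" by (simp add: n1)
    also have "\<dots> = x" by simp
    finally show ?thesis .
  qed
  show ?thesis
  proof (induction t rule: int_induct[where k=0])
    case base then show ?case by simp
  next
    case (step1 i)
    have "T (int n * (i+1)) x = T (int n * i) (T (int n) x)" by (simp add: algebra_simps)
    then show ?case using step1 n1 by simp
  next
    case (step2 i)
    have "T (int n * (i-1)) x = T (int n * i) (T (- int n) x)" by (simp add: algebra_simps)
    then show ?case using step2 n2 by simp
  qed
qed

lemma T_per: "T (a + int n * t) x = T a x"
proof -
  have "T (a + int n * t) x = T a (T (int n * t) x)" by simp
  then show ?thesis by (simp only: Tn)
qed

lemma r_prop: assumes "n > 0" shows "\<exists>r>0. r dvd n \<and> (\<forall>w. (\<Sum>k<r. (g ^^ k) w) \<in> Rd)"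
proof -
  let ?r = "r_gg g \<gamma>"
  have d: "?r dvd n" using nd assms by blast
  have ex: "\<exists>r>0. \<forall>x. (\<Sum>k<r. (g ^^ k) x) \<in> Rad \<gamma>"
  proof (rule ccontr)
    assume na: "\<not> (\<exists>r>0. \<forall>x. (\<Sum>k<r. (g ^^ k) x) \<in> Rad \<gamma>)"
    have "?r = 0" unfolding r_gg_def by (rule if_not_P[OF na])
    then show False using d assms by simp
  qed
  then have "?r > 0 \<and> (\<forall>x. (\<Sum>k<?r. (g ^^ k) x) \<in> Rad \<gamma>)" unfolding r_gg_def
    using LeastI_ex[of "\<lambda>r. r > 0 \<and> (\<forall>x. (\<Sum>k<r. (g ^^ k) x) \<in> Rad \<gamma>)"] by simp
  then show ?thesis using d by (auto simp: Rd_def)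
qed

lemma sum_mult_Rd:
  assumes R: "\<forall>w. (\<Sum>k<r. (g ^^ k) w) \<in> Rd"
  shows "(\<Sum>k<r * q. (g ^^ k) w) \<in> Rd"
proof (induction q)
  case 0 then show ?case by simp
next
  case (Suc q)
  have split: "{..<r * Suc q} = {..<r*q} \<union> {r*q..<r*q + r}" by auto
  have "(\<Sum>k\<in>{r*q..<r*q + r}. (g ^^ k) w) = (\<Sum>k\<in>{0 + r*q..<r + r*q}. (g ^^ k) w)"
    by (simp add: add.commute)
  also have "\<dots> = (\<Sum>k\<in>{0..<r}. (g ^^ (k + r*q)) w)"
    by (rule sum.shift_bounds_nat_ivl)
  also have "\<dots> = (\<Sum>k<r. (g ^^ k) ((g ^^ (r*q)) w))"
    by (simp add: funpow_add atLeast0LessThan)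
  finally have "(\<Sum>k\<in>{r*q..<r*q + r}. (g ^^ k) w) \<in> Rd" using R by simp
  moreover have "(\<Sum>k<r * Suc q. (g ^^ k) w) = (\<Sum>k<r*q. (g ^^ k) w) + (\<Sum>k\<in>{r*q..<r*q + r}. (g ^^ k) w)"
    unfolding split by (rule sum.union_disjoint) auto
  ultimately show ?case using Suc by simp
qed

lemma sum_n_Rd: assumes "n > 0" shows "(\<Sum>k<n. (g ^^ k) w) \<in> Rd"
proof -
  obtain r where r: "r > 0" "r dvd n" "\<forall>w. (\<Sum>k<r. (g ^^ k) w) \<in> Rd" using r_prop[OF assms] by blast
  obtain q where "n = r * q" using r(2) by (auto simp: dvd_def)
  then show ?thesis using sum_mult_Rd[OF r(3)] by simp
qed

lemma gamma_sum: "\<gamma> (sum f A) y = (\<Sum>k\<in>A. \<gamma> (f k) y)"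
  by (induction A rule: infinite_finite_induct) auto

lemma S_n0: "S (\<gamma> x y) a (a + int n) = 0"
proof (cases "n > 0")
  case False then show ?thesis by simp
next
  case True
  have inj: "inj_on (\<lambda>k::nat. a + int k) {..<n}" by (auto simp: inj_on_def)
  have im: "(\<lambda>k::nat. a + int k) ` {..<n} = {a..<a + int n}"
  proof
    show "(\<lambda>k::nat. a + int k) ` {..<n} \<subseteq> {a..<a + int n}" by auto
    show "{a..<a + int n} \<subseteq> (\<lambda>k::nat. a + int k) ` {..<n}"
    proof
      fix m assume m: "m \<in> {a..<a + int n}"
      then have "m = a + int (nat (m - a))" "nat (m - a) < n" by auto
      then show "m \<in> (\<lambda>k::nat. a + int k) ` {..<n}" by blast
    qed
  qed
  have "S (\<gamma> x y) a (a + int n) = (\<Sum>k\<in>{a..<a + int n}. T (- k) (\<gamma> x y))"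
    by (simp add: S_le)
  also have "\<dots> = (\<Sum>k<n. T (- (a + int k)) (\<gamma> x y))"
    unfolding im[symmetric] sum.reindex[OF inj] by (simp add: o_def)
  also have "\<dots> = (\<Sum>k<n. \<gamma> ((g ^^ k) (T a x)) y)"
  proof (rule sum.cong)
    fix k assume "k \<in> {..<n}"
    have "\<gamma> ((g ^^ k) (T a x)) y = \<gamma> (T (int k + a) x) y" by (simp add: T_nat[symmetric])
    then show "T (- (a + int k)) (\<gamma> x y) = \<gamma> ((g ^^ k) (T a x)) y" by (simp add: add.commute)
  qed simp
  also have "\<dots> = \<gamma> (\<Sum>k<n. (g ^^ k) (T a x)) y" by (simp add: gamma_sum)
  also have "\<dots> = 0" using sum_n_Rd[OF True] by simp
  finally show ?thesis .
qed

lemma S_nt: "S (\<gamma> x y) a (a + int n * t) = 0"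
proof (induction t rule: int_induct[where k=0])
  case base then show ?case by simp
next
  case (step1 i)
  have "S (\<gamma> x y) a (a + int n * (i+1)) = S (\<gamma> x y) a (a + int n * i) + S (\<gamma> x y) (a + int n * i) (a + int n * i + int n)"
    using S_cocycle[OF tor_gamma, of u v] by (simp add: S_cocycle[OF tor_gamma] algebra_simps)
  then show ?case using step1 S_n0 by simp
next
  case (step2 i)
  have "S (\<gamma> x y) a (a + int n * (i-1)) = S (\<gamma> x y) a (a + int n * i) + S (\<gamma> x y) (a + int n * i) (a + int n * i - int n)"
    by (simp add: S_cocycle[OF tor_gamma] algebra_simps)
  also have "S (\<gamma> x y) (a + int n * i) (a + int n * i - int n) = S (\<gamma> x y) (a + int n * i - int n) (a + int n * i - int n + int n)"
    by (simp add: S_sym[of _ "a + int n * i"])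
  finally show ?case using step2 S_n0[of x y "a + int n * i - int n"] by simp
qed

lemma S_per: "S (\<gamma> x y) (a + int n * s) (b + int n * t) = S (\<gamma> x y) a b"
proof -
  have "S (\<gamma> x y) (a + int n * s) (b + int n * t) = S (\<gamma> x y) (a + int n * s) b + S (\<gamma> x y) b (b + int n * t)"
    by (simp add: S_cocycle[OF tor_gamma])
  also have "S (\<gamma> x y) (a + int n * s) b = S (\<gamma> x y) (a + int n * s) a + S (\<gamma> x y) a b"
    by (simp add: S_cocycle[OF tor_gamma])
  also have "S (\<gamma> x y) (a + int n * s) a = 0" using S_nt[of x y a s] by (simp add: S_sym)
  finally show ?thesis using S_nt by simp
qed

lemma wd: assumes "i mod int n = i' mod int n" "j mod int n = j' mod int n"
  shows "sd_comp g \<gamma> i x j y = sd_comp g \<gamma> i' x j' y"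
proof -
  have "int n dvd i' - i" using assms(1) mod_eq_dvd_iff[of i' "int n" i] by simp
  then obtain s where "i' - i = int n * s" by (auto simp: dvd_def)
  then have s: "i' = i + int n * s" by simp
  have "int n dvd j' - j" using assms(2) mod_eq_dvd_iff[of j' "int n" j] by simp
  then obtain t where "j' - j = int n * t" by (auto simp: dvd_def)
  then have t: "j' = j + int n * t" by simp
  have e1: "- j' = - j + int n * (- t)" using t by simp
  have e2: "i' + j' = (i + j) + int n * (s + t)" using s t by (simp add: algebra_simps)
  show ?thesis unfolding comp_eq e1 e2 by (simp only: T_per S_per)
qed

end



context cpn begin

definition red :: "int \<times> 'a \<Rightarrow> int \<times> 'a" where "red p = (fst p mod int n, snd p)"
definition mu :: "int \<times> 'a \<Rightarrow> int \<times> 'a \<Rightarrow> int \<times> 'a" where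
  "mu p q = (fst p + fst q, sd_comp g \<gamma> (fst p) (snd p) (fst q) (snd q))"
definition iv :: "int \<times> 'a \<Rightarrow> int \<times> 'a" where "iv p = (- fst p, - T (fst p) (snd p))"

lemma sdm: "sd_mult n g \<gamma> p q = red (mu p q)"
  by (cases p, cases q) (simp add: sd_mult_def red_def mu_def)

lemma red_red[simp]: "red (red p) = red p" by (simp add: red_def)

lemma RED: "red (mu (red p) (red q)) = red (mu p q)"
proof -
  have "sd_comp g \<gamma> (fst p mod int n) (snd p) (fst q mod int n) (snd q) = sd_comp g \<gamma> (fst p) (snd p) (fst q) (snd q)"
    by (rule wd[symmetric]) simp_all
  then show ?thesis by (simp add: red_def mu_def mod_add_eq)
qed
lemma RED1[simp]: "red (mu (red p) q) = red (mu p q)"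
  using RED[of p q] RED[of "red p" q] by simp
lemma RED2[simp]: "red (mu p (red q)) = red (mu p q)"
  using RED[of p q] RED[of p "red q"] by simp

lemma red_in[simp]: "red p \<in> sd_carrier n"
  by (cases "n = 0") (auto simp: red_def sd_carrier_def cyc_carrier_def)
lemma red_id: "p \<in> sd_carrier n \<Longrightarrow> red p = p"
  by (cases p) (auto simp: red_def sd_carrier_def cyc_carrier_def split: if_splits)

lemma mu_mouf: "mu (mu a b) (mu c a) = mu (mu a (mu b c)) a"
  using mouf2[of "fst a" "fst b" "snd a" "snd b" "fst c" "snd c"] by (simp add: mu_def algebra_simps)
lemma mu_LIP: "mu (iv a) (mu a b) = b"
  using LIP2[of "fst a" "snd a" "fst b" "snd b"] by (simp add: mu_def iv_def)
lemma mu_LIPb: "mu a (mu (iv a) b) = b"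
  using LIP2b[of "fst a" "snd a" "fst b" "snd b"] by (simp add: mu_def iv_def)
lemma mu_RIP: "mu (mu b a) (iv a) = b"
  using RIP2[of "fst b" "fst a" "snd b" "snd a"] by (simp add: mu_def iv_def)
lemma mu_RIPb: "mu (mu b (iv a)) a = b"
  using RIP2b[of "fst b" "fst a" "snd b" "snd a"] by (simp add: mu_def iv_def)
lemma mu_inv1: "mu a (iv a) = (0, 0)"
  using INV1[of "fst a" "snd a"] by (simp add: mu_def iv_def)
lemma mu_inv2: "mu (iv a) a = (0, 0)"
  using INV2[of "fst a" "snd a"] by (simp add: mu_def iv_def)
lemma mu_id1: "mu (0, 0) a = a"
  using ID1[of "fst a" "snd a"] by (simp add: mu_def)
lemma mu_id2: "mu a (0, 0) = a"
  using ID2[of "fst a" "snd a"] by (simp add: mu_def)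

lemma red00[simp]: "red (0, 0) = (0, 0)" by (simp add: red_def)

lemma loop: "is_moufang_loop (sd_carrier n) (sd_mult n g \<gamma>) (0, 0)"
  unfolding is_moufang_loop_def is_loop_def sdm
proof (intro conjI ballI)
  show "(0, 0::'a) \<in> sd_carrier n" using red_in[of "(0,0::'a)"] red00 by metis
next
  fix a b :: "int \<times> 'a" assume "a \<in> sd_carrier n" "b \<in> sd_carrier n"
  then show "red (mu a b) \<in> sd_carrier n" by simp
next
  fix a :: "int \<times> 'a" assume a: "a \<in> sd_carrier n"
  show "red (mu (0, 0) a) = a" using red_id[OF a] by (simp add: mu_id1)
  show "red (mu a (0, 0)) = a" using red_id[OF a] by (simp add: mu_id2)
next
  fix a b :: "int \<times> 'a" assume a: "a \<in> sd_carrier n" and b: "b \<in> sd_carrier n"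
  show "\<exists>!x. x \<in> sd_carrier n \<and> red (mu a x) = b"
  proof
    show "red (mu (iv a) b) \<in> sd_carrier n \<and> red (mu a (red (mu (iv a) b))) = b"
      using red_id[OF b] by (simp add: mu_LIPb)
  next
    fix x :: "int \<times> 'a" assume x: "x \<in> sd_carrier n \<and> red (mu a x) = b"
    from x have bx: "b = red (mu a x)" by simp
    have "red (mu (iv a) b) = red (mu (iv a) (mu a x))" unfolding bx by (rule RED2)
    also have "\<dots> = x" using red_id x by (simp add: mu_LIP)
    finally show "x = red (mu (iv a) b)" by simp
  qed
  show "\<exists>!y. y \<in> sd_carrier n \<and> red (mu y a) = b"
  proof
    show "red (mu b (iv a)) \<in> sd_carrier n \<and> red (mu (red (mu b (iv a))) a) = b"
      using red_id[OF b] by (simp add: mu_RIPb)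
  next
    fix y :: "int \<times> 'a" assume y: "y \<in> sd_carrier n \<and> red (mu y a) = b"
    from y have bx: "b = red (mu y a)" by simp
    have "red (mu b (iv a)) = red (mu (mu y a) (iv a))" unfolding bx by (rule RED1)
    also have "\<dots> = y" using red_id y by (simp add: mu_RIP)
    finally show "y = red (mu b (iv a))" by simp
  qed
next
  fix x y z :: "int \<times> 'a" assume "x \<in> sd_carrier n" "y \<in> sd_carrier n" "z \<in> sd_carrier n"
  show "red (mu (red (mu x y)) (red (mu z x))) = red (mu (red (mu x (red (mu y z)))) x)"
    by (simp add: mu_mouf)
qed

lemma invs: assumes "i \<in> cyc_carrier n"
  shows "((- i) mod int n, - gpow g i x) \<in> sd_carrier n \<and>
            sd_mult n g \<gamma> (i, x) ((- i) mod int n, - gpow g i x) = (0, 0) \<and>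
            sd_mult n g \<gamma> ((- i) mod int n, - gpow g i x) (i, x) = (0, 0)"
proof -
  have e: "((- i) mod int n, - gpow g i x) = red (iv (i, x))" by (simp add: red_def iv_def T_def)
  have i: "(i, x) \<in> sd_carrier n" using assms by (simp add: sd_carrier_def)
  show ?thesis unfolding e sdm using red_id[OF i] mu_inv1[of "(i,x)"] mu_inv2[of "(i,x)"]
    by (metis RED1 RED2 red00 red_in)
qed

end

theorem mainTheorem2:
  fixes g :: "'a::ab_group_add \<Rightarrow> 'a" and \<gamma> :: "'a \<Rightarrow> 'a \<Rightarrow> 'a" and n :: nat
  assumes "construction_pair g \<gamma>"
    and "n > 0 \<Longrightarrow> perm_order g dvd n \<and> r_gg g \<gamma> dvd n"
  shows "(\<forall>i i' j j' x y. i mod int n = i' mod int n \<longrightarrow> j mod int n = j' mod int n \<longrightarrow>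
            sd_comp g \<gamma> i x j y = sd_comp g \<gamma> i' x j' y)
       \<and> is_moufang_loop (sd_carrier n) (sd_mult n g \<gamma>) (0, 0)
       \<and> (\<forall>i\<in>cyc_carrier n. \<forall>x.
            ((- i) mod int n, - gpow g i x) \<in> sd_carrier n \<and>
            sd_mult n g \<gamma> (i, x) ((- i) mod int n, - gpow g i x) = (0, 0) \<and>
            sd_mult n g \<gamma> ((- i) mod int n, - gpow g i x) (i, x) = (0, 0))"
proof -
  interpret I: cpn g \<gamma> n
    by (rule cpn.intro[OF cpair.intro[OF assms(1)] cpn_axioms.intro[OF assms(2)]])
  show ?thesis using I.wd I.loop I.invs by blast
qed



end
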